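(* Let $k\ge2$, let $\Pi\subsetneq\Sigma_k$ be a proper subshift, and let $T:\Pi\to\Sigma_k$ be the map constructed below. Then for every $y\in\Pi$, $V(T(y),\sigma)=V(y,\sigma)$.
   Context: $\Sigma_k=\{0,\dots,k-1\}^{\mathbb{N}}$ with metric $d(x,y)=\sum_{n\ge1}\delta(x_n,y_n)/2^n$ ($\delta(a,b)=0$ if $a=b$, $1$ otherwise) and shift $\sigma$. A subshift is a nonempty closed $\sigma$-invariant subset; a finite word is contained in $\Pi$ if it is a prefix of some point of $\Pi$. Construction of $T$: enumerate all finite words contained in $\Pi$ as $C_1,C_2,\dots$; fix a finite word $A_1$ not contained in $\Pi$; for $y\in\Pi$ let $Y_n$ be its first $n$ symbols; $B_n=C_nY_n\cdots Y_n$ ($Y_n$ repeated $|A_n|^2$ times), $A_{n+1}=A_nB_nA_n$; $T(y)$ is the point having every $A_n$ as prefix; the construction requires $|C_n|=o(|A_n|)$. $V(x,\sigma)$ denotes the set of weak$^*$ limit points of the empirical measures $\frac1n\sum_{i=0}^{n-1}\delta_{\sigma^i(x)}$. *)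

theory Defs
  imports "HOL-Probability.Probability"
begin

text \<open>Points of Sigma_k are sequences nat => nat; the paper's symbol x_n (n >= 1)
  is x (n - 1) here, i.e. indexing starts at 0.\<close>

definition Sigma :: "nat \<Rightarrow> (nat \<Rightarrow> nat) set" where
  "Sigma k = {x. \<forall>n. x n < k}"

definition seqdist :: "(nat \<Rightarrow> nat) \<Rightarrow> (nat \<Rightarrow> nat) \<Rightarrow> real" where
  "seqdist x y = (\<Sum>n. (if x n = y n then 0 else 1) / 2 ^ Suc n)"

definition Sigma_top :: "nat \<Rightarrow> (nat \<Rightarrow> nat) topology" where
  "Sigma_top k = Metric_space.mtopology (Sigma k) seqdist"

definition shift :: "(nat \<Rightarrow> nat) \<Rightarrow> (nat \<Rightarrow> nat)" where
  "shift x = (\<lambda>n. x (Suc n))"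

definition borel_sets_of :: "'a topology \<Rightarrow> 'a set set" where
  "borel_sets_of X = sigma_sets (topspace X) {U. openin X U}"

definition subshift :: "nat \<Rightarrow> (nat \<Rightarrow> nat) set \<Rightarrow> bool" where
  "subshift k P \<longleftrightarrow> P \<noteq> {} \<and> P \<subseteq> Sigma k \<and> closedin (Sigma_top k) P \<and> shift ` P \<subseteq> P"

definition contained :: "(nat \<Rightarrow> nat) set \<Rightarrow> nat list \<Rightarrow> bool" where
  "contained P w \<longleftrightarrow> (\<exists>x\<in>P. \<forall>i<length w. x i = w ! i)"

definition birk_avg :: "((nat \<Rightarrow> nat) \<Rightarrow> real) \<Rightarrow> (nat \<Rightarrow> nat) \<Rightarrow> nat \<Rightarrow> real" where
  "birk_avg f x n = (\<Sum>i<n. f ((shift ^^ i) x)) / real n"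

text \<open>V(x, sigma): weak-* limit (accumulation) points of the empirical measures,
  i.e. Borel probability measures mu on Sigma_k such that every weak-* basic
  neighbourhood of mu contains the n-th empirical measure for infinitely many n.\<close>
definition Vset :: "nat \<Rightarrow> (nat \<Rightarrow> nat) \<Rightarrow> (nat \<Rightarrow> nat) measure set" where
  "Vset k x = {\<mu>. prob_space \<mu> \<and> space \<mu> = Sigma k \<and> sets \<mu> = borel_sets_of (Sigma_top k) \<and>
     (\<forall>F (\<epsilon>::real). finite F \<longrightarrow> F \<subseteq> {f. continuous_map (Sigma_top k) euclideanreal f} \<longrightarrow> \<epsilon> > 0 \<longrightarrow>
        (\<exists>\<^sub>F n in sequentially. \<forall>f\<in>F. \<bar>birk_avg f x n - integral\<^sup>L \<mu> f\<bar> < \<epsilon>))}"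

text \<open>The words A_n. Aseq A1 C y 0 is the paper's A_1 and Aseq A1 C y n is A_(n+1);
  C m is the paper's C_m (m >= 1), Y_m = first m symbols of y.\<close>
fun Aseq :: "nat list \<Rightarrow> (nat \<Rightarrow> nat list) \<Rightarrow> (nat \<Rightarrow> nat) \<Rightarrow> nat \<Rightarrow> nat list" where
  "Aseq A1 C y 0 = A1"
| "Aseq A1 C y (Suc n) =
     (let A = Aseq A1 C y n; m = Suc n;
          B = C m @ concat (replicate (length A ^ 2) (map y [0..<m]))
      in A @ B @ A)"

definition Tmap :: "nat list \<Rightarrow> (nat \<Rightarrow> nat list) \<Rightarrow> (nat \<Rightarrow> nat) \<Rightarrow> (nat \<Rightarrow> nat)" where
  "Tmap A1 C y = (THE x. \<forall>n. \<forall>i<length (Aseq A1 C y n). x i = Aseq A1 C y n ! i)"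

end

theory Submission
  imports Defs
begin

lemma seqdist_term_le: "(if (x::nat\<Rightarrow>nat) n = y n then 0 else 1) / 2 ^ Suc n \<le> ((1/2::real) ^ Suc n)"
  by (simp add: power_one_over)

lemma seqdist_summable: "summable (\<lambda>n. (if (x::nat\<Rightarrow>nat) n = y n then 0 else 1) / (2::real) ^ Suc n)"
proof (rule summable_comparison_test[of _ "\<lambda>n. (1/2::real) ^ Suc n"])
  show "\<exists>N. \<forall>n\<ge>N. norm ((if x n = y n then 0 else 1) / (2::real) ^ Suc n) \<le> (1 / 2) ^ Suc n"
    by (auto simp: power_one_over)
  show "summable (\<lambda>n. (1/2::real) ^ Suc n)"
    using summable_geometric[of "1/2::real"] by (simp add: summable_mult)
qed

lemma seqdist_nonneg: "0 \<le> seqdist x y"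
  unfolding seqdist_def by (rule suminf_nonneg[OF seqdist_summable]) auto

lemma seqdist_commute: "seqdist x y = seqdist y x"
  unfolding seqdist_def by (simp add: eq_commute)

lemma seqdist_ge: assumes "x i \<noteq> y i" shows "1 / 2 ^ Suc i \<le> seqdist x y"
proof -
  have "sum (\<lambda>n. (if x n = y n then 0 else 1) / (2::real) ^ Suc n) {i} \<le> seqdist x y"
    unfolding seqdist_def by (rule sum_le_suminf[OF seqdist_summable]) auto
  then show ?thesis using assms by simp
qed

lemma seqdist_zero: "seqdist x y = 0 \<longleftrightarrow> x = y"
proof
  assume "seqdist x y = 0"
  show "x = y"
  proof (rule ccontr)
    assume "x \<noteq> y" then obtain i where i: "x i \<noteq> y i" by auto
    have pos: "0 < 1 / (2::real) ^ Suc i" by simp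
    from seqdist_ge[of x i y, OF i] \<open>seqdist x y = 0\<close> pos show False
      by linarith
  qed
qed (simp add: seqdist_def)

lemma seqdist_triangle: "seqdist x z \<le> seqdist x y + seqdist y z"
proof -
  have "seqdist x z \<le> (\<Sum>n. (if x n = y n then 0 else 1) / (2::real) ^ Suc n + (if y n = z n then 0 else 1) / (2::real) ^ Suc n)"
    unfolding seqdist_def
  proof (rule suminf_le)
    fix n show "(if x n = z n then 0 else 1) / (2::real) ^ Suc n \<le> (if x n = y n then 0 else 1) / (2::real) ^ Suc n + (if y n = z n then 0 else 1) / (2::real) ^ Suc n"
      by (auto simp: divide_right_mono)
    show "summable (\<lambda>n. (if x n = z n then 0 else 1) / (2::real) ^ Suc n)" by (rule seqdist_summable)
    show "summable (\<lambda>n. (if x n = y n then 0 else 1) / (2::real) ^ Suc n + (if y n = z n then 0 else 1) / (2::real) ^ Suc n)"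
      by (intro summable_add seqdist_summable)
  qed
  also have "\<dots> = seqdist x y + seqdist y z"
    unfolding seqdist_def by (rule suminf_add[symmetric]; rule seqdist_summable)
  finally show ?thesis .
qed

lemma Metric_space_Sigma: "Metric_space (Sigma k) seqdist"
  by unfold_locales (auto simp: seqdist_nonneg seqdist_commute seqdist_zero seqdist_triangle)

lemma seqdist_agree_le:
  assumes "\<And>j. j < L \<Longrightarrow> x j = y j"
  shows "seqdist x y \<le> (1/2) ^ L"
proof -
  let ?f = "\<lambda>n. (if x n = y n then 0 else 1) / (2::real) ^ Suc n"
  have "seqdist x y = (\<Sum>n. ?f (n + L)) + (\<Sum>i<L. ?f i)"
    unfolding seqdist_def by (rule suminf_split_initial_segment[OF seqdist_summable])
  also have "(\<Sum>i<L. ?f i) = 0" using assms by simp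
  also have "(\<Sum>n. ?f (n + L)) \<le> (\<Sum>n. (1/2)^L * (1/2::real) ^ Suc n)"
  proof (rule suminf_le)
    show "summable (\<lambda>n. ?f (n + L))" using summable_ignore_initial_segment[OF seqdist_summable[of x y], of L] by simp
    show "summable (\<lambda>n. (1/2)^L * (1/2::real) ^ Suc n)"
      using summable_geometric[of "1/2::real"] by (simp add: summable_mult)
    fix n show "?f (n + L) \<le> (1/2)^L * (1/2::real) ^ Suc n"
      by (simp add: power_add mult_ac power_one_over)
  qed
  also have "(\<Sum>n. (1/2)^L * (1/2::real) ^ Suc n) = (1/2)^L"
  proof -
    have "(\<Sum>n. (1/2)^L * (1/2::real) ^ Suc n) = (1/2)^L * (1/2) * (\<Sum>n. (1/2::real) ^ n)"
      by (subst suminf_mult[symmetric]) (auto simp: summable_geometric mult_ac)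
    also have "\<dots> = (1/2)^L" by (simp add: suminf_geometric)
    finally show ?thesis .
  qed
  finally show ?thesis by simp
qed

lemma seqdist_small_agree:
  assumes "seqdist x y < (1/2) ^ L" "j < L" shows "x j = y j"
proof (rule ccontr)
  assume "x j \<noteq> y j"
  from seqdist_ge[of x j y, OF this] have "1/2 ^ Suc j \<le> seqdist x y" .
  moreover have "(1/2::real) ^ L \<le> 1 / 2 ^ Suc j"
  proof -
    have "(1/2::real)^L \<le> (1/2)^Suc j" by (rule power_decreasing) (use assms(2) in auto)
    then show ?thesis by (simp add: power_one_over)
  qed
  ultimately show False using assms(1) by simp
qed

lemma small_pow: assumes "(0::real) < e" obtains L where "(1/2::real)^L < e"
  using real_arch_pow_inv[OF assms, of "1/2"] by auto

lemma Sigma_totally_bounded: "Metric_space.mtotally_bounded (Sigma k) seqdist (Sigma k)"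
proof -
  interpret SM: Metric_space "Sigma k" seqdist by (rule Metric_space_Sigma)
  show ?thesis unfolding SM.mtotally_bounded_def
  proof (intro allI impI)
    fix e :: real assume "e > 0"
    then obtain L where L: "(1/2::real)^L < e" by (rule small_pow)
    define tr where "tr = (\<lambda>x::nat\<Rightarrow>nat. \<lambda>i. if i < L then x i else 0)"
    define K where "K = tr ` Sigma k"
    have "K \<subseteq> (\<lambda>g. \<lambda>i. if i < L then g i else 0) ` ({..<L} \<rightarrow>\<^sub>E {..<k})"
    proof
      fix z assume "z \<in> K"
      then obtain x where x: "x \<in> Sigma k" "z = tr x" unfolding K_def by auto
      have "restrict x {..<L} \<in> {..<L} \<rightarrow>\<^sub>E {..<k}" using x(1) by (auto simp: Sigma_def)
      moreover have "z = (\<lambda>i. if i < L then restrict x {..<L} i else 0)" using x(2) by (auto simp: tr_def)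
      ultimately show "z \<in> (\<lambda>g. \<lambda>i. if i < L then g i else 0) ` ({..<L} \<rightarrow>\<^sub>E {..<k})" by blast
    qed
    then have "finite K" by (rule finite_subset) (intro finite_imageI finite_PiE; simp)
    moreover have "K \<subseteq> Sigma k"
      unfolding K_def tr_def Sigma_def by (auto, metis gr_zeroI less_nat_zero_code)
    moreover have "Sigma k \<subseteq> (\<Union>x\<in>K. SM.mball x e)"
    proof
      fix x assume x: "x \<in> Sigma k"
      have "tr x \<in> K" using x unfolding K_def by auto
      moreover have "seqdist (tr x) x \<le> (1/2)^L" by (rule seqdist_agree_le) (simp add: tr_def)
      ultimately show "x \<in> (\<Union>x\<in>K. SM.mball x e)" using x L \<open>K \<subseteq> Sigma k\<close> by force
    qed
    ultimately show "\<exists>K. finite K \<and> K \<subseteq> Sigma k \<and> Sigma k \<subseteq> (\<Union>x\<in>K. SM.mball x e)" by blast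
  qed
qed

lemma Sigma_mcomplete: "Metric_space.mcomplete (Sigma k) seqdist"
proof -
  interpret SM: Metric_space "Sigma k" seqdist by (rule Metric_space_Sigma)
  show ?thesis unfolding SM.mcomplete_def
  proof (intro allI impI)
    fix \<sigma> assume C: "SM.MCauchy \<sigma>"
    then have rng: "range \<sigma> \<subseteq> Sigma k" and cau: "\<And>e. e > 0 \<Longrightarrow> \<exists>N. \<forall>n n'. N \<le> n \<longrightarrow> N \<le> n' \<longrightarrow> seqdist (\<sigma> n) (\<sigma> n') < e"
      unfolding SM.MCauchy_def by auto
    have "\<forall>L. \<exists>N. \<forall>n n'. N \<le> n \<longrightarrow> N \<le> n' \<longrightarrow> seqdist (\<sigma> n) (\<sigma> n') < (1/2)^L"
      using cau by simp
    then obtain N where N: "\<And>L n n'. N L \<le> n \<Longrightarrow> N L \<le> n' \<Longrightarrow> seqdist (\<sigma> n) (\<sigma> n') < (1/2)^L"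
      by metis
    define z where "z = (\<lambda>j. \<sigma> (N (Suc j)) j)"
    have z: "z \<in> Sigma k" using rng unfolding z_def Sigma_def by auto
    have "limitin SM.mtopology \<sigma> z sequentially"
      unfolding SM.limitin_metric
    proof (intro conjI z allI impI)
      fix e :: real assume "e > 0"
      then obtain L where L: "(1/2::real)^L < e" by (rule small_pow)
      show "\<forall>\<^sub>F n in sequentially. \<sigma> n \<in> Sigma k \<and> seqdist (\<sigma> n) z < e"
        unfolding eventually_sequentially
      proof (intro exI allI impI conjI)
        fix n assume n: "(\<Sum>j<L. N (Suc j)) \<le> n"
        show "\<sigma> n \<in> Sigma k" using rng by auto
        have "seqdist (\<sigma> n) z \<le> (1/2)^L"
        proof (rule seqdist_agree_le)
          fix j assume "j < L"
          then have "N (Suc j) \<le> (\<Sum>j<L. N (Suc j))" by (intro member_le_sum) auto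
          then have "seqdist (\<sigma> n) (\<sigma> (N (Suc j))) < (1/2)^Suc j" using n by (intro N) auto
          then show "\<sigma> n j = z j" unfolding z_def by (rule seqdist_small_agree) simp
        qed
        then show "seqdist (\<sigma> n) z < e" using L by linarith
      qed
    qed
    then show "\<exists>x. limitin SM.mtopology \<sigma> x sequentially" by blast
  qed
qed

lemma Sigma_compact: "compact_space (Sigma_top k)"
proof -
  interpret SM: Metric_space "Sigma k" seqdist by (rule Metric_space_Sigma)
  show ?thesis unfolding Sigma_top_def SM.compact_space_eq_mcomplete_mtotally_bounded
    using Sigma_mcomplete Sigma_totally_bounded by blast
qed

lemma topspace_Sigma_top[simp]: "topspace (Sigma_top k) = Sigma k"
proof -
  interpret SM: Metric_space "Sigma k" seqdist by (rule Metric_space_Sigma)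
  show ?thesis unfolding Sigma_top_def by simp
qed

lemma cont_cyl:
  assumes f: "continuous_map (Sigma_top k) euclideanreal f" and e: "e > 0"
  obtains L where "\<And>u v. u \<in> Sigma k \<Longrightarrow> v \<in> Sigma k \<Longrightarrow> (\<And>j. j < L \<Longrightarrow> u j = v j) \<Longrightarrow> \<bar>f u - f v\<bar> < e"
proof -
  interpret SM: Metric_space "Sigma k" seqdist by (rule Metric_space_Sigma)
  have "uniformly_continuous_map (metric (Sigma k, seqdist)) euclidean_metric f"
    using Sigma_compact[of k] f
    by (intro continuous_imp_uniformly_continuous_map) (simp add: Sigma_top_def)
  then obtain d where d: "d > 0" "\<And>u v. u \<in> Sigma k \<Longrightarrow> v \<in> Sigma k \<Longrightarrow> seqdist v u < d \<Longrightarrow> dist (f v) (f u) < e"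
    unfolding uniformly_continuous_map_def using e by auto
  obtain L where L: "(1/2::real)^L < d" using d(1) by (rule small_pow)
  show ?thesis
  proof (rule that[of L])
    fix u v assume uv: "u \<in> Sigma k" "v \<in> Sigma k" "\<And>j. j < L \<Longrightarrow> u j = v j"
    have "seqdist u v \<le> (1/2)^L" by (rule seqdist_agree_le) (use uv in auto)
    then have "dist (f u) (f v) < e" using d(2)[OF uv(2) uv(1)] L by linarith
    then show "\<bar>f u - f v\<bar> < e" by (simp add: dist_real_def)
  qed
qed

lemma cont_bounded:
  assumes f: "continuous_map (Sigma_top k) euclideanreal f"
  obtains M where "M \<ge> 0" "\<And>u. u \<in> Sigma k \<Longrightarrow> \<bar>f u\<bar> \<le> M"
proof -
  have "compactin euclideanreal (f ` Sigma k)"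
    using image_compactin[OF Sigma_compact[of k, unfolded compact_space_def] f] by simp
  then have "bounded (f ` Sigma k)" by (simp add: compact_imp_bounded)
  then obtain M where "\<And>u. u \<in> Sigma k \<Longrightarrow> \<bar>f u\<bar> \<le> M" by (auto simp: bounded_iff)
  moreover have "\<bar>f u\<bar> \<le> max M 0" if "u \<in> Sigma k" for u using calculation that by force
  ultimately show ?thesis using that[of "max M 0"] by auto
qed

lemma concat_replicate_nth:
  assumes "j < q" "r < length w"
  shows "concat (replicate q w) ! (j * length w + r) = w ! r"
  using assms
proof (induction j arbitrary: q)
  case 0
  then obtain q' where "q = Suc q'" by (cases q) auto
  then show ?case using 0 by (simp add: nth_append)
next
  case (Suc j)
  then obtain q' where q: "q = Suc q'" by (cases q) auto
  have "concat (replicate q w) ! (Suc j * length w + r) = concat (replicate q' w) ! (j * length w + r)"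
    unfolding q by (simp add: nth_append add.assoc)
  also have "\<dots> = w ! r" using Suc q by auto
  finally show ?case .
qed

lemma length_concat_replicate: "length (concat (replicate q w)) = q * length w"
  by (induction q) auto

lemma Aseq_Suc_len:
  "length (Aseq A1 C y (Suc n)) = 2 * length (Aseq A1 C y n) + length (C (Suc n)) + length (Aseq A1 C y n) ^ 2 * Suc n"
  by (simp add: Let_def length_concat_replicate)

lemma Aseq_prefix_Suc: "i < length (Aseq A1 C y n) \<Longrightarrow> Aseq A1 C y (Suc n) ! i = Aseq A1 C y n ! i"
  by (simp add: Let_def nth_append)

declare Aseq.simps(2)[simp del]

lemma Aseq_len_mono_Suc: "length (Aseq A1 C y n) \<le> length (Aseq A1 C y (Suc n))"
  by (simp add: Aseq_Suc_len)

lemma Aseq_len_mono: "n \<le> m \<Longrightarrow> length (Aseq A1 C y n) \<le> length (Aseq A1 C y m)"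
  by (induction m rule: dec_induct) (auto intro: order_trans[OF _ Aseq_len_mono_Suc])

lemma Aseq_prefix: "n \<le> m \<Longrightarrow> i < length (Aseq A1 C y n) \<Longrightarrow> Aseq A1 C y m ! i = Aseq A1 C y n ! i"
proof (induction m rule: dec_induct)
  case (step m)
  then have "i < length (Aseq A1 C y m)" using Aseq_len_mono[OF step(1), of A1 C y] by auto
  then show ?case using step by (simp add: Aseq_prefix_Suc)
qed simp

lemma Aseq_len_pos: "A1 \<noteq> [] \<Longrightarrow> 1 \<le> length (Aseq A1 C y n)"
  using Aseq_len_mono[of 0 n A1 C y] by (cases A1) auto

lemma Aseq_len_gt: "A1 \<noteq> [] \<Longrightarrow> n < length (Aseq A1 C y n)"
proof (induction n)
  case 0 then show ?case by (cases A1) auto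
next
  case (Suc n)
  then show ?case by (simp add: Aseq_Suc_len)
qed

lemma Tmap_nth:
  assumes "A1 \<noteq> []" "i < length (Aseq A1 C y n)"
  shows "Tmap A1 C y i = Aseq A1 C y n ! i"
proof -
  define z where "z = (\<lambda>i. Aseq A1 C y i ! i)"
  have P: "\<forall>n. \<forall>i<length (Aseq A1 C y n). z i = Aseq A1 C y n ! i"
  proof (intro allI impI)
    fix n i assume i: "i < length (Aseq A1 C y n)"
    have ii: "i < length (Aseq A1 C y i)" using Aseq_len_gt[OF assms(1), where n=i and C=C and y=y] .
    show "z i = Aseq A1 C y n ! i"
      unfolding z_def using Aseq_prefix[OF max.cobounded1 ii, of n] Aseq_prefix[OF max.cobounded2 i, of i]
      by simp
  qed
  have U: "x = z" if "\<forall>n. \<forall>i<length (Aseq A1 C y n). x i = Aseq A1 C y n ! i" for x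
  proof
    fix i show "x i = z i" using that P Aseq_len_gt[OF assms(1), where n=i and C=C and y=y] by auto
  qed
  have "Tmap A1 C y = z" unfolding Tmap_def
    by (rule the_equality, rule P, rule U, assumption)
  then show ?thesis using P assms(2) by auto
qed

lemma Aseq_letters:
  assumes "set A1 \<subseteq> {..<k}" "\<And>m. m \<ge> 1 \<Longrightarrow> set (C m) \<subseteq> {..<k}" "y \<in> Sigma k"
  shows "set (Aseq A1 C y n) \<subseteq> {..<k}"
proof (induction n)
  case 0 then show ?case using assms by simp
next
  case (Suc n)
  have "set (C (Suc n)) \<subseteq> {..<k}" using assms(2) by simp
  moreover have "set (map y [0..<Suc n]) \<subseteq> {..<k}" using assms(3) by (auto simp: Sigma_def)
  ultimately show ?case using Suc by (auto simp: Let_def Aseq.simps(2))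
qed

lemma Tmap_Sigma:
  assumes "A1 \<noteq> []" "set A1 \<subseteq> {..<k}" "\<And>m. m \<ge> 1 \<Longrightarrow> set (C m) \<subseteq> {..<k}" "y \<in> Sigma k"
  shows "Tmap A1 C y \<in> Sigma k"
  unfolding Sigma_def
proof (intro CollectI allI)
  fix i
  have i: "i < length (Aseq A1 C y i)" using Aseq_len_gt[OF assms(1), where n=i and C=C and y=y] .
  have "Tmap A1 C y i = Aseq A1 C y i ! i" by (rule Tmap_nth[OF assms(1) i])
  also have "\<dots> \<in> set (Aseq A1 C y i)" using i by simp
  finally show "Tmap A1 C y i < k" using Aseq_letters[of A1 k C y i, OF assms(2-4)] by auto
qed

lemma Tmap_periodic:
  assumes "A1 \<noteq> []" "j < length (Aseq A1 C y n) ^ 2" "r < Suc n"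
  shows "Tmap A1 C y (length (Aseq A1 C y n) + length (C (Suc n)) + j * Suc n + r) = y r"
proof -
  let ?a = "length (Aseq A1 C y n)" and ?c = "length (C (Suc n))"
  let ?Y = "map y [0..<Suc n]"
  let ?R = "concat (replicate (?a^2) ?Y)"
  have jr: "j * Suc n + r < ?a^2 * Suc n"
  proof -
    have "j * Suc n + r < Suc j * Suc n" using assms(3) by simp
    also have "\<dots> \<le> ?a^2 * Suc n" using assms(2) by (intro mult_right_mono) auto
    finally show ?thesis .
  qed
  have len: "?a + ?c + j * Suc n + r < length (Aseq A1 C y (Suc n))"
    using jr by (simp add: Aseq_Suc_len)
  have "Tmap A1 C y (?a + ?c + j * Suc n + r) = Aseq A1 C y (Suc n) ! (?a + ?c + j * Suc n + r)"
    by (rule Tmap_nth[OF assms(1) len])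
  also have "\<dots> = ?R ! (j * length ?Y + r)"
    using jr by (simp add: Let_def nth_append length_concat_replicate add.assoc Aseq.simps(2))
  also have "\<dots> = ?Y ! r" using assms by (intro concat_replicate_nth) auto
  also have "\<dots> = y r" using assms(3) by (simp del: upt_Suc)
  finally show ?thesis .
qed

lemma shift_pow: "(shift ^^ i) z = (\<lambda>j. z (j + i))"
  by (induction i arbitrary: z) (auto simp: shift_def funpow_swap1)

lemma shift_pow_Sigma: "z \<in> Sigma k \<Longrightarrow> (shift ^^ i) z \<in> Sigma k"
  by (auto simp: shift_pow Sigma_def)

locale est =
  fixes k :: nat and f :: "(nat \<Rightarrow> nat) \<Rightarrow> real" and M \<epsilon> :: real and L :: nat and x y :: "nat \<Rightarrow> nat"
  assumes x: "x \<in> Sigma k" and y: "y \<in> Sigma k"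
    and bnd: "\<And>u. u \<in> Sigma k \<Longrightarrow> \<bar>f u\<bar> \<le> M"
    and cyl: "\<And>u v. u \<in> Sigma k \<Longrightarrow> v \<in> Sigma k \<Longrightarrow> (\<And>j. j < L \<Longrightarrow> u j = v j) \<Longrightarrow> \<bar>f u - f v\<bar> \<le> \<epsilon>"
begin

definition g where "g i = f ((shift ^^ i) x)"
definition h where "h i = f ((shift ^^ i) y)"
definition E where "E p = birk_avg f y p"
definition D where "D s l e = (\<Sum>i=s..<s+l. g i) - real l * e"

lemma g_bnd: "\<bar>g i\<bar> \<le> M" unfolding g_def by (intro bnd shift_pow_Sigma x)
lemma h_bnd: "\<bar>h i\<bar> \<le> M" unfolding h_def by (intro bnd shift_pow_Sigma y)
lemma M_nonneg: "0 \<le> M" using g_bnd[of 0] by linarith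

lemma eps_nonneg: "0 \<le> \<epsilon>"
proof -
  have "\<bar>f x - f x\<bar> \<le> \<epsilon>" by (rule cyl[OF x x]) simp
  then show ?thesis by simp
qed

lemma E_eq: "E p = (\<Sum>i<p. h i) / real p"
  unfolding E_def birk_avg_def h_def by simp

lemma E_bnd: "\<bar>E p\<bar> \<le> M"
proof (cases "p = 0")
  case True then show ?thesis using M_nonneg by (simp add: E_eq)
next
  case False
  have "\<bar>\<Sum>i<p. h i\<bar> \<le> (\<Sum>i<p. \<bar>h i\<bar>)" by (rule sum_abs)
  also have "\<dots> \<le> (\<Sum>i<p. M)" by (intro sum_mono h_bnd)
  finally have "\<bar>\<Sum>i<p. h i\<bar> \<le> real p * M" by simp
  then show ?thesis using False by (simp add: E_eq field_simps)
qed

lemma D_add: "D s (l1 + l2) e = D s l1 e + D (s + l1) l2 e"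
proof -
  have "(\<Sum>i=s..<s+(l1+l2). g i) = (\<Sum>i=s..<s+l1. g i) + (\<Sum>i=s+l1..<s+l1+l2. g i)"
    by (subst sum.atLeastLessThan_concat[symmetric, of s "s+l1"]) (auto simp: add.assoc)
  then show ?thesis unfolding D_def by (simp add: algebra_simps)
qed

lemma D_triv: assumes "\<bar>e\<bar> \<le> M" shows "\<bar>D s l e\<bar> \<le> 2 * M * real l"
proof -
  have "\<bar>\<Sum>i=s..<s+l. g i\<bar> \<le> (\<Sum>i=s..<s+l. \<bar>g i\<bar>)" by (rule sum_abs)
  also have "\<dots> \<le> (\<Sum>i=s..<s+l. M)" by (intro sum_mono g_bnd)
  finally have "\<bar>\<Sum>i=s..<s+l. g i\<bar> \<le> real l * M" by simp
  moreover have "\<bar>real l * e\<bar> \<le> real l * M" using assms by (simp add: abs_mult mult_left_mono)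
  ultimately show ?thesis unfolding D_def
    using abs_triangle_ineq4[of "sum g {s..<s+l}" "real l * e"] by (simp add: algebra_simps)
qed

lemma period1:
  assumes per: "\<And>r. r < p \<Longrightarrow> x (s + r) = y r"
  shows "\<bar>(\<Sum>i=s..<s+p. g i) - (\<Sum>r<p. h r)\<bar> \<le> real p * \<epsilon> + 2 * real L * M"
proof -
  have eq: "(\<Sum>i=s..<s+p. g i) = (\<Sum>r<p. g (s + r))"
    using sum.atLeastLessThan_shift_bounds[of g 0 s p] by (simp add: atLeast0LessThan add.commute o_def)
  have tb: "\<bar>g (s + r) - h r\<bar> \<le> \<epsilon> + (if p < r + L then 2 * M else 0)" if r: "r < p" for r
  proof (cases "p < r + L")
    case True
    have "\<bar>g (s + r) - h r\<bar> \<le> \<bar>g (s+r)\<bar> + \<bar>h r\<bar>" by linarith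
    also have "\<dots> \<le> 2 * M" using g_bnd[of "s+r"] h_bnd[of r] by linarith
    finally have "\<bar>g (s + r) - h r\<bar> \<le> 2 * M" .
    moreover have "0 \<le> \<epsilon>" by (rule eps_nonneg)
    ultimately show ?thesis using True by simp
  next
    case False
    have "\<bar>g (s + r) - h r\<bar> \<le> \<epsilon>" unfolding g_def h_def
    proof (rule cyl)
      show "(shift ^^ (s + r)) x \<in> Sigma k" "(shift ^^ r) y \<in> Sigma k" by (intro shift_pow_Sigma x y)+
      fix j assume "j < L"
      then have "j + r < p" using False by simp
      then show "(shift ^^ (s + r)) x j = (shift ^^ r) y j"
        unfolding shift_pow using per[of "j + r"] by (simp add: add.commute add.left_commute)
    qed
    then show ?thesis using False by simp
  qed
  have "\<bar>(\<Sum>r<p. g (s + r)) - (\<Sum>r<p. h r)\<bar> = \<bar>\<Sum>r<p. g (s + r) - h r\<bar>" by (simp add: sum_subtractf)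
  also have "\<dots> \<le> (\<Sum>r<p. \<bar>g (s + r) - h r\<bar>)" by (rule sum_abs)
  also have "\<dots> \<le> (\<Sum>r<p. \<epsilon> + (if p < r + L then 2 * M else 0))" by (intro sum_mono tb) auto
  also have "\<dots> = real p * \<epsilon> + 2 * M * real (card ({..<p} \<inter> {r. p < r + L}))"
    by (simp add: sum.distrib sum.If_cases)
  also have "\<dots> \<le> real p * \<epsilon> + 2 * M * real L"
  proof -
    have "{..<p} \<inter> {r. p < r + L} \<subseteq> {p - L..<p}" by auto
    then have "card ({..<p} \<inter> {r. p < r + L}) \<le> card {p - L..<p}" by (intro card_mono) auto
    also have "\<dots> \<le> L" by simp
    finally show ?thesis using M_nonneg by (simp add: mult_left_mono)
  qed
  finally show ?thesis unfolding eq by (simp add: mult_ac)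
qed

lemma periods_full:
  assumes per: "\<And>j r. j < J \<Longrightarrow> r < p \<Longrightarrow> x (s + j * p + r) = y r" and "q \<le> J"
  shows "\<bar>(\<Sum>i=s..<s+q*p. g i) - real q * (\<Sum>r<p. h r)\<bar> \<le> real q * (real p * \<epsilon> + 2 * real L * M)"
  using assms(2)
proof (induction q)
  case 0 then show ?case by simp
next
  case (Suc q)
  have split: "(\<Sum>i=s..<s+Suc q*p. g i) = (\<Sum>i=s..<s+q*p. g i) + (\<Sum>i=s+q*p..<s+q*p+p. g i)"
  proof -
    have "s + Suc q * p = s + q * p + p" by simp
    then show ?thesis using sum.atLeastLessThan_concat[of s "s+q*p" "s+q*p+p" g] by (simp add: algebra_simps)
  qed
  have "\<bar>(\<Sum>i=s+q*p..<s+q*p+p. g i) - (\<Sum>r<p. h r)\<bar> \<le> real p * \<epsilon> + 2 * real L * M"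
    by (rule period1) (use per Suc.prems in \<open>auto simp: add.assoc\<close>)
  moreover have "\<bar>(\<Sum>i=s..<s+q*p. g i) - real q * (\<Sum>r<p. h r)\<bar> \<le> real q * (real p * \<epsilon> + 2 * real L * M)"
    using Suc by simp
  ultimately show ?case unfolding split
    using abs_triangle_ineq[of "(\<Sum>i=s..<s+q*p. g i) - real q * (\<Sum>r<p. h r)" "(\<Sum>i=s+q*p..<s+q*p+p. g i) - (\<Sum>r<p. h r)"]
    by (simp add: algebra_simps)
qed

lemma periods:
  assumes per: "\<And>j r. j < J \<Longrightarrow> r < p \<Longrightarrow> x (s + j * p + r) = y r" and p: "0 < p" and u: "u \<le> J * p"
  shows "\<bar>D s u (E p)\<bar> \<le> real u * (\<epsilon> + 2 * real L * M / real p) + 2 * M * real p"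
proof -
  define q where "q = u div p"
  define r where "r = u mod p"
  have u_eq: "u = q * p + r" unfolding q_def r_def by simp
  have rp: "r < p" unfolding r_def using p by simp
  have qJ: "q \<le> J" using u p unfolding q_def by (metis div_le_mono div_mult_self_is_m)
  have "\<bar>(\<Sum>i=s..<s+q*p. g i) - real q * (\<Sum>r<p. h r)\<bar> \<le> real q * (real p * \<epsilon> + 2 * real L * M)"
    by (rule periods_full[OF per qJ])
  moreover have eqE: "real q * (\<Sum>r<p. h r) = real (q * p) * E p" using p by (simp add: E_eq)
  moreover have eqq: "real (q*p) * (\<epsilon> + 2 * real L * M / real p) = real q * (real p * \<epsilon> + 2 * real L * M)"
  proof -
    have "real p * (\<epsilon> + 2 * real L * M / real p) = real p * \<epsilon> + 2 * real L * M" using p by (simp add: field_simps)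
    then show ?thesis by (simp only: of_nat_mult mult.assoc)
  qed
  ultimately have A: "\<bar>D s (q * p) (E p)\<bar> \<le> real (q * p) * (\<epsilon> + 2 * real L * M / real p)"
    unfolding D_def by (simp only:)
  have B: "\<bar>D (s + q * p) r (E p)\<bar> \<le> 2 * M * real p"
  proof -
    have "2 * M * real r \<le> 2 * M * real p" using rp M_nonneg by (intro mult_left_mono) auto
    then show ?thesis using D_triv[OF E_bnd, of "s + q * p" r p] by linarith
  qed
  have eps0: "0 \<le> \<epsilon>" by (rule eps_nonneg)
  have "real (q * p) * (\<epsilon> + 2 * real L * M / real p) \<le> real u * (\<epsilon> + 2 * real L * M / real p)"
    using eps0 M_nonneg u_eq by (intro mult_right_mono) auto
  then show ?thesis using A B D_add[of s "q*p" r "E p"] u_eq by simp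
qed

lemma E_step: assumes "0 < p" shows "\<bar>E (Suc p) - E p\<bar> \<le> 2 * M / real (Suc p)"
proof -
  have "E (Suc p) - E p = (real p * h p - (\<Sum>i<p. h i)) / (real p * real (Suc p))"
    using assms by (simp add: E_eq field_simps)
  moreover have B: "\<bar>real p * h p - (\<Sum>i<p. h i)\<bar> \<le> 2 * M * real p"
  proof -
    have "\<bar>\<Sum>i<p. h i\<bar> \<le> real p * M" using E_bnd[of p] assms by (simp add: E_eq field_simps)
    moreover have "\<bar>real p * h p\<bar> \<le> real p * M" using h_bnd[of p] by (simp add: abs_mult mult_left_mono)
    ultimately show ?thesis
      using abs_triangle_ineq4[of "real p * h p" "sum h {..<p}"] by (simp add: algebra_simps)
  qed
  ultimately have "\<bar>E (Suc p) - E p\<bar> = \<bar>real p * h p - (\<Sum>i<p. h i)\<bar> / (real p * real (Suc p))"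
    by (simp add: abs_div)
  also have "\<dots> \<le> 2 * M * real p / (real p * real (Suc p))"
    by (rule divide_right_mono) (use \<open>\<bar>real p * h p - (\<Sum>i<p. h i)\<bar> \<le> 2 * M * real p\<close> in auto)
  also have "\<dots> = 2 * M / real (Suc p)" using assms by simp
  finally show ?thesis .
qed

end

locale est2 = est +
  fixes A1 :: "nat list" and C :: "nat \<Rightarrow> nat list"
  assumes A1: "A1 \<noteq> []" and xT: "x = Tmap A1 C y"
begin

abbreviation "\<alpha> n \<equiv> length (Aseq A1 C y n)"
abbreviation "cl m \<equiv> length (C m)"

lemma eps0: "0 \<le> \<epsilon>" by (rule eps_nonneg)

lemma stepA:
  fixes n :: nat
  defines "a \<equiv> \<alpha> n" and "c1 \<equiv> cl (Suc n)"
  shows "\<bar>D 0 (\<alpha> (Suc n)) (E (Suc n))\<bar> \<le> real (\<alpha> (Suc n)) * (\<epsilon> + 2 * real L * M / real (Suc n))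
            + 2 * M * real (Suc n) + 2 * M * (2 * real a + real c1)"
proof -
  let ?e = "E (Suc n)" and ?d = "\<epsilon> + 2 * real L * M / real (Suc n)"
  have A': "\<alpha> (Suc n) = a + c1 + a^2 * Suc n + a" unfolding a_def c1_def by (simp add: Aseq_Suc_len)
  have dec: "D 0 (\<alpha> (Suc n)) ?e = D 0 a ?e + D a c1 ?e + D (a + c1) (a^2 * Suc n) ?e + D (a + c1 + a^2 * Suc n) a ?e"
    unfolding A' by (simp add: D_add)
  have P: "\<bar>D (a + c1) (a^2 * Suc n) ?e\<bar> \<le> real (a^2 * Suc n) * ?d + 2 * M * real (Suc n)"
  proof (rule periods[where J = "a^2"])
    fix j r assume "j < a^2" "r < Suc n"
    then show "x (a + c1 + j * Suc n + r) = y r" unfolding xT a_def c1_def by (intro Tmap_periodic A1)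
  qed auto
  have T1: "\<bar>D 0 a ?e\<bar> \<le> 2 * M * real a" by (rule D_triv[OF E_bnd])
  have T2: "\<bar>D a c1 ?e\<bar> \<le> 2 * M * real c1" by (rule D_triv[OF E_bnd])
  have T3: "\<bar>D (a + c1 + a^2 * Suc n) a ?e\<bar> \<le> 2 * M * real a" by (rule D_triv[OF E_bnd])
  have d0: "0 \<le> ?d" using eps0 M_nonneg by simp
  have "real (a^2 * Suc n) * ?d \<le> real (\<alpha> (Suc n)) * ?d"
    using d0 by (intro mult_right_mono) (auto simp: A')
  then show ?thesis using dec P T1 T2 T3 by (simp add: algebra_simps)
qed

lemma stepB:
  fixes n u :: nat
  defines "A' \<equiv> \<alpha> (Suc n)" and "c2 \<equiv> cl (Suc (Suc n))"
  assumes u: "u \<le> c2 + A'^2 * Suc (Suc n)"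
  shows "\<bar>D A' u (E (Suc n))\<bar> \<le> real u * (\<epsilon> + (2 * real L * M + 2 * M) / real (Suc n))
            + 2 * M * real c2 + 2 * M * real (Suc (Suc n))"
proof -
  let ?e = "E (Suc n)" and ?d = "\<epsilon> + (2 * real L * M + 2 * M) / real (Suc n)"
  have d0: "0 \<le> ?d" using eps0 M_nonneg by simp
  show ?thesis
  proof (cases "u \<le> c2")
    case True
    have "\<bar>D A' u ?e\<bar> \<le> 2 * M * real u" by (rule D_triv[OF E_bnd])
    also have "\<dots> \<le> 2 * M * real c2" using True M_nonneg by (simp add: mult_left_mono)
    moreover have "0 \<le> real u * ?d" using d0 by simp
    moreover have "0 \<le> 2 * M * real (Suc (Suc n))" using M_nonneg by simp
    ultimately show ?thesis by linarith
  next
    case False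
    define v where "v = u - c2"
    have uv: "u = c2 + v" using False unfolding v_def by simp
    have v: "v \<le> A'^2 * Suc (Suc n)" using u uv by simp
    have dec: "D A' u ?e = D A' c2 ?e + D (A' + c2) v ?e" unfolding uv by (simp add: D_add)
    have T: "\<bar>D A' c2 ?e\<bar> \<le> 2 * M * real c2" by (rule D_triv[OF E_bnd])
    have sw: "D (A' + c2) v ?e = D (A' + c2) v (E (Suc (Suc n))) + real v * (E (Suc (Suc n)) - ?e)"
      unfolding D_def by (simp add: algebra_simps)
    have P: "\<bar>D (A' + c2) v (E (Suc (Suc n)))\<bar> \<le> real v * (\<epsilon> + 2 * real L * M / real (Suc (Suc n))) + 2 * M * real (Suc (Suc n))"
    proof (rule periods[where J = "A'^2"])
      fix j r assume "j < A'^2" "r < Suc (Suc n)"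
      then show "x (A' + c2 + j * Suc (Suc n) + r) = y r" unfolding xT A'_def c2_def by (intro Tmap_periodic A1)
    qed (use v in auto)
    have St: "\<bar>real v * (E (Suc (Suc n)) - ?e)\<bar> \<le> real v * (2 * M / real (Suc (Suc n)))"
      unfolding abs_mult abs_of_nat using E_step[of "Suc n"] by (intro mult_left_mono) auto
    have "real v * (\<epsilon> + 2 * real L * M / real (Suc (Suc n))) + real v * (2 * M / real (Suc (Suc n)))
          = real v * (\<epsilon> + (2 * real L * M + 2 * M) / real (Suc (Suc n)))"
      by (simp add: algebra_simps add_divide_distrib)
    also have "\<dots> \<le> real v * ?d"
    proof (intro mult_left_mono add_left_mono divide_left_mono)
      show "0 \<le> 2 * real L * M + 2 * M" using M_nonneg by simp
    qed auto
    also have "\<dots> \<le> real u * ?d" using uv d0 by (intro mult_right_mono) auto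
    finally have "real v * (\<epsilon> + 2 * real L * M / real (Suc (Suc n))) + real v * (2 * M / real (Suc (Suc n))) \<le> real u * ?d" .
    then show ?thesis using dec T sw P St by linarith
  qed
qed

lemma Dt:
  fixes n t :: nat
  defines "a \<equiv> \<alpha> n" and "c1 \<equiv> cl (Suc n)" and "A' \<equiv> \<alpha> (Suc n)" and "c2 \<equiv> cl (Suc (Suc n))"
  assumes t: "A' \<le> t" "t \<le> A' + c2 + A'^2 * Suc (Suc n)"
  shows "\<bar>D 0 t (E (Suc n))\<bar> \<le> real t * (\<epsilon> + (2 * real L * M + 2 * M) / real (Suc n))
     + (2 * M * real (Suc n) + 2 * M * (2 * real a + real c1) + 2 * M * real c2 + 2 * M * real (Suc (Suc n)))"
proof -
  let ?e = "E (Suc n)" and ?d = "\<epsilon> + (2 * real L * M + 2 * M) / real (Suc n)"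
  have dec: "D 0 t ?e = D 0 A' ?e + D A' (t - A') ?e" using D_add[of 0 A' "t - A'" ?e] t by simp
  have A: "\<bar>D 0 A' ?e\<bar> \<le> real A' * (\<epsilon> + 2 * real L * M / real (Suc n))
            + 2 * M * real (Suc n) + 2 * M * (2 * real a + real c1)"
    unfolding A'_def a_def c1_def by (rule stepA)
  have B: "\<bar>D A' (t - A') ?e\<bar> \<le> real (t - A') * ?d + 2 * M * real c2 + 2 * M * real (Suc (Suc n))"
    unfolding A'_def c2_def by (rule stepB) (use t in \<open>auto simp: A'_def c2_def\<close>)
  have "real A' * (\<epsilon> + 2 * real L * M / real (Suc n)) \<le> real A' * ?d"
    using M_nonneg by (intro mult_left_mono add_left_mono divide_right_mono) auto
  moreover have "real A' * ?d + real (t - A') * ?d = real t * ?d"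
  proof -
    have "real A' + real (t - A') = real t" using t by simp
    then show ?thesis by (metis distrib_right)
  qed
  ultimately show ?thesis using dec A B by linarith
qed

lemma div_bound:
  fixes Dv t dl R :: real
  assumes "0 < t" "\<bar>Dv\<bar> \<le> t * dl + R"
  shows "\<bar>Dv / t\<bar> \<le> dl + R / t"
proof -
  have "\<bar>Dv / t\<bar> = \<bar>Dv\<bar> / t" using assms(1) by (simp add: abs_div)
  also have "\<dots> \<le> (t * dl + R) / t" using assms by (intro divide_right_mono) auto
  also have "\<dots> = dl + R / t" using assms(1) by (simp add: field_simps)
  finally show ?thesis .
qed

lemma avg_D: "0 < t \<Longrightarrow> birk_avg f x t - e = D 0 t e / real t"
  unfolding birk_avg_def D_def g_def by (simp add: atLeast0LessThan field_simps)

lemma final1: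
  fixes n t :: nat
  defines "a \<equiv> \<alpha> n" and "c1 \<equiv> cl (Suc n)" and "A' \<equiv> \<alpha> (Suc n)" and "c2 \<equiv> cl (Suc (Suc n))"
  assumes t: "A' \<le> t" "t \<le> \<alpha> (Suc (Suc n))"
  shows "\<bar>birk_avg f x t - E (Suc n)\<bar> \<le> (\<epsilon> + (2 * real L * M + 2 * M) / real (Suc n))
     + (2 * M * real (Suc n) + 2 * M * (2 * real a + real c1) + 2 * M * real c2 + 2 * M * real (Suc (Suc n)) + 2 * M) / real A'"
proof -
  let ?e = "E (Suc n)" and ?d = "\<epsilon> + (2 * real L * M + 2 * M) / real (Suc n)"
  let ?R = "2 * M * real (Suc n) + 2 * M * (2 * real a + real c1) + 2 * M * real c2 + 2 * M * real (Suc (Suc n))"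
  define T0 where "T0 = A' + c2 + A'^2 * Suc (Suc n)"
  have aT: "\<alpha> (Suc (Suc n)) = T0 + A'" unfolding T0_def A'_def c2_def by (simp add: Aseq_Suc_len)
  have A'pos: "1 \<le> A'" unfolding A'_def by (rule Aseq_len_pos[OF A1])
  have tpos: "0 < t" using t A'pos by simp
  have R0: "0 \<le> ?R" using M_nonneg by simp
  have key: "\<bar>D 0 t ?e\<bar> \<le> real t * ?d + ?R + (if t \<le> T0 then 0 else 2 * M * real A')"
  proof (cases "t \<le> T0")
    case True
    then show ?thesis using Dt[of n t] t unfolding a_def c1_def A'_def c2_def T0_def by simp
  next
    case False
    have dec: "D 0 t ?e = D 0 T0 ?e + D T0 (t - T0) ?e" using D_add[of 0 T0 "t - T0" ?e] False by simp
    have "\<bar>D 0 T0 ?e\<bar> \<le> real T0 * ?d + ?R"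
      using Dt[of n T0] unfolding a_def c1_def A'_def c2_def T0_def by simp
    moreover have "\<bar>D T0 (t - T0) ?e\<bar> \<le> 2 * M * real A'"
    proof -
      have "\<bar>D T0 (t - T0) ?e\<bar> \<le> 2 * M * real (t - T0)" by (rule D_triv[OF E_bnd])
      also have "\<dots> \<le> 2 * M * real A'" using t aT M_nonneg by (intro mult_left_mono) auto
      finally show ?thesis .
    qed
    moreover have "real T0 * ?d \<le> real t * ?d"
      using False eps0 M_nonneg by (intro mult_right_mono) auto
    ultimately show ?thesis using dec False by simp
  qed
  have extra: "(if t \<le> T0 then 0 else 2 * M * real A') / real t \<le> 2 * M / real A'"
  proof (cases "t \<le> T0")
    case True then show ?thesis using M_nonneg by simp
  next
    case False
    have "real A' * real A' \<le> real t"
    proof -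
      have "A' * A' \<le> A'^2 * Suc (Suc n)" by (simp add: power2_eq_square)
      also have "\<dots> \<le> t" using False unfolding T0_def by simp
      finally show ?thesis by (simp only: of_nat_mult[symmetric] of_nat_le_iff)
    qed
    then have "2 * M * real A' / real t \<le> 2 * M * real A' / (real A' * real A')"
      using A'pos M_nonneg tpos by (intro divide_left_mono) auto
    also have "\<dots> = 2 * M / real A'" using A'pos by simp
    finally show ?thesis using False by simp
  qed
  have "\<bar>birk_avg f x t - ?e\<bar> = \<bar>D 0 t ?e / real t\<bar>" using avg_D[OF tpos] by simp
  also have "\<dots> \<le> ?d + (?R + (if t \<le> T0 then 0 else 2 * M * real A')) / real t"
    using key tpos by (intro div_bound) auto
  also have "\<dots> = ?d + ?R / real t + (if t \<le> T0 then 0 else 2 * M * real A') / real t"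
    by (simp add: add_divide_distrib)
  also have "?R / real t \<le> ?R / real A'" using R0 t A'pos by (intro divide_left_mono) auto
  finally show ?thesis using extra by (simp add: add_divide_distrib)
qed

lemma final2:
  fixes n t :: nat
  assumes t: "\<alpha> (Suc n) \<le> t" "t \<le> \<alpha> (Suc (Suc n))"
  shows "\<bar>birk_avg f x t - E (Suc n)\<bar> \<le> \<epsilon> + (2 * real L * M + 14 * M) / real (Suc n)
     + 2 * M * (real (cl (Suc n)) / real (\<alpha> n) + real (cl (Suc (Suc n))) / real (\<alpha> (Suc n)))"
proof -
  define a where "a = \<alpha> n"
  define A' where "A' = \<alpha> (Suc n)"
  define c1 where "c1 = cl (Suc n)"
  define c2 where "c2 = cl (Suc (Suc n))"
  have F: "\<bar>birk_avg f x t - E (Suc n)\<bar> \<le> (\<epsilon> + (2 * real L * M + 2 * M) / real (Suc n))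
     + (2 * M * real (Suc n) + 2 * M * (2 * real a + real c1) + 2 * M * real c2 + 2 * M * real (Suc (Suc n)) + 2 * M) / real A'"
    using final1[OF t] unfolding a_def A'_def c1_def c2_def by simp
  have apos: "Suc n \<le> a" unfolding a_def using Aseq_len_gt[OF A1, of n C y] by simp
  have A'ge: "a * Suc n \<le> A'"
  proof -
    have "a \<le> a^2" using apos by (simp add: power2_eq_square)
    then have "a * Suc n \<le> a^2 * Suc n" by (rule mult_right_mono) simp
    then show ?thesis unfolding A'_def a_def by (simp add: Aseq_Suc_len)
  qed
  have aA: "a \<le> A'"
  proof -
    have "a \<le> a * Suc n" by simp
    then show ?thesis using A'ge by (rule le_trans)
  qed
  have a0: "0 < a" using apos by simp
  define W where "W = real (Suc n) + 2 * real a + real (Suc (Suc n)) + 1"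
  have split: "(2 * M * real (Suc n) + 2 * M * (2 * real a + real c1) + 2 * M * real c2 + 2 * M * real (Suc (Suc n)) + 2 * M) / real A'
      = 2 * M * (W / real A') + 2 * M * (real c1 / real A') + 2 * M * (real c2 / real A')"
    using a0 aA unfolding W_def by (simp add: field_simps)
  have W: "W / real A' \<le> 6 / real (Suc n)"
  proof -
    have "W \<le> 6 * real a" unfolding W_def using apos by simp
    moreover have "real a * real (Suc n) \<le> real A'" using A'ge by (simp only: of_nat_mult[symmetric] of_nat_le_iff)
    ultimately have "W / real A' \<le> (6 * real a) / (real a * real (Suc n))"
      using a0 by (intro frac_le) auto
    also have "\<dots> = 6 / real (Suc n)" using a0 by simp
    finally show ?thesis .
  qed
  have c1: "real c1 / real A' \<le> real c1 / real a" using aA a0 by (intro divide_left_mono) auto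
  have "2 * M * (W / real A') + 2 * M * (real c1 / real A') + 2 * M * (real c2 / real A')
     \<le> 2 * M * (6 / real (Suc n)) + 2 * M * (real c1 / real a) + 2 * M * (real c2 / real A')"
    using W c1 M_nonneg by (intro add_mono mult_left_mono) auto
  moreover have "(2 * real L * M + 2 * M) / real (Suc n) + 2 * M * (6 / real (Suc n))
     = (2 * real L * M + 14 * M) / real (Suc n)"
  proof -
    have "2 * M * (6 / real (Suc n)) = (12 * M) / real (Suc n)" by simp
    moreover have "(2 * real L * M + 2 * M) / real (Suc n) + (12 * M) / real (Suc n) = (2 * real L * M + 2 * M + 12 * M) / real (Suc n)"
      by (rule add_divide_distrib[symmetric])
    moreover have "2 * real L * M + 2 * M + 12 * M = 2 * real L * M + 14 * M" by simp
    ultimately show ?thesis by simp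
  qed
  moreover have "2 * M * (real c1 / real a + real c2 / real A') = 2 * M * (real c1 / real a) + 2 * M * (real c2 / real A')"
    by (simp add: distrib_left)
  ultimately show ?thesis using F split unfolding a_def A'_def c1_def c2_def by linarith
qed

end

lemma forward:
  fixes k :: nat and f :: "(nat \<Rightarrow> nat) \<Rightarrow> real" and y :: "nat \<Rightarrow> nat" and A1 and C :: "nat \<Rightarrow> nat list"
  assumes y: "y \<in> Sigma k" and A1: "A1 \<noteq> []" and A1k: "set A1 \<subseteq> {..<k}"
    and Ck: "\<And>m. m \<ge> 1 \<Longrightarrow> set (C m) \<subseteq> {..<k}"
    and lim: "(\<lambda>n. real (length (C (Suc n))) / real (length (Aseq A1 C y n))) \<longlonglongrightarrow> 0"
    and f: "continuous_map (Sigma_top k) euclideanreal f" and e: "e > 0"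
  shows "eventually (\<lambda>n. \<forall>t. length (Aseq A1 C y (Suc n)) \<le> t \<longrightarrow> t \<le> length (Aseq A1 C y (Suc (Suc n))) \<longrightarrow>
            \<bar>birk_avg f (Tmap A1 C y) t - birk_avg f y (Suc n)\<bar> < e) sequentially"
proof -
  obtain M where M: "M \<ge> 0" "\<And>u. u \<in> Sigma k \<Longrightarrow> \<bar>f u\<bar> \<le> M" using cont_bounded[OF f] by blast
  have e2: "e / 2 > 0" using e by simp
  obtain L where L: "\<And>u v. u \<in> Sigma k \<Longrightarrow> v \<in> Sigma k \<Longrightarrow> (\<And>j. j < L \<Longrightarrow> u j = v j) \<Longrightarrow> \<bar>f u - f v\<bar> < e / 2"
    using cont_cyl[OF f e2] by blast
  have xS: "Tmap A1 C y \<in> Sigma k" by (rule Tmap_Sigma[OF A1 A1k Ck y])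
  interpret E2: est2 k f M "e/2" L "Tmap A1 C y" y A1 C
  proof
    show "Tmap A1 C y \<in> Sigma k" by (rule xS)
    show "y \<in> Sigma k" by (rule y)
    show "\<And>u. u \<in> Sigma k \<Longrightarrow> \<bar>f u\<bar> \<le> M" by (rule M(2))
    show "\<And>u v. u \<in> Sigma k \<Longrightarrow> v \<in> Sigma k \<Longrightarrow> (\<And>j. j < L \<Longrightarrow> u j = v j) \<Longrightarrow> \<bar>f u - f v\<bar> \<le> e / 2"
      using L by (meson less_imp_le)
    show "A1 \<noteq> []" by (rule A1)
  qed simp
  define hh where "hh n = (2 * real L * M + 14 * M) / real (Suc n)
     + 2 * M * (real (length (C (Suc n))) / real (length (Aseq A1 C y n)) + real (length (C (Suc (Suc n)))) / real (length (Aseq A1 C y (Suc n))))" for n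
  have t1: "(\<lambda>n. (2 * real L * M + 14 * M) / real (Suc n)) \<longlonglongrightarrow> 0"
    using LIMSEQ_Suc[OF lim_const_over_n[of "2 * real L * M + 14 * M"]] by simp
  have t3: "(\<lambda>n. real (length (C (Suc (Suc n)))) / real (length (Aseq A1 C y (Suc n)))) \<longlonglongrightarrow> 0"
    using LIMSEQ_Suc[OF lim] by simp
  have "hh \<longlonglongrightarrow> 0 + 2 * M * (0 + 0)"
    unfolding hh_def by (intro tendsto_add tendsto_mult tendsto_const t1 t3 lim)
  then have "hh \<longlonglongrightarrow> 0" by simp
  then have ev: "eventually (\<lambda>n. hh n < e / 2) sequentially" using e2 by (rule order_tendstoD(2))
  show ?thesis
  proof (rule eventually_mono[OF ev], intro allI impI)
    fix n t assume hn: "hh n < e / 2"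
      and t: "length (Aseq A1 C y (Suc n)) \<le> t" "t \<le> length (Aseq A1 C y (Suc (Suc n)))"
    have "\<bar>birk_avg f (Tmap A1 C y) t - E2.E (Suc n)\<bar> \<le> e / 2 + hh n"
      using E2.final2[OF t] unfolding hh_def by simp
    then show "\<bar>birk_avg f (Tmap A1 C y) t - birk_avg f y (Suc n)\<bar> < e"
      using hn unfolding E2.E_def by simp
  qed
qed

lemma interval_find:
  assumes A1: "A1 \<noteq> []" and t: "length (Aseq A1 C y (Suc N0)) \<le> t"
  shows "\<exists>n\<ge>N0. length (Aseq A1 C y (Suc n)) \<le> t \<and> t \<le> length (Aseq A1 C y (Suc (Suc n)))"
proof -
  let ?a = "\<lambda>m. length (Aseq A1 C y m)"
  have ex: "\<exists>m. t < ?a m" using Aseq_len_gt[OF A1, of t C y] by blast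
  define m where "m = (LEAST m. t < ?a m)"
  have m: "t < ?a m" unfolding m_def using LeastI_ex[OF ex] .
  have mmin: "\<And>j. j < m \<Longrightarrow> \<not> t < ?a j" unfolding m_def using not_less_Least by blast
  have "Suc N0 < m"
  proof (rule ccontr)
    assume "\<not> Suc N0 < m"
    then have "?a m \<le> ?a (Suc N0)" by (intro Aseq_len_mono) simp
    then show False using m t by simp
  qed
  define n where "n = m - 2"
  have n: "m = Suc (Suc n)" "N0 \<le> n" using \<open>Suc N0 < m\<close> unfolding n_def by auto
  have "?a (Suc n) \<le> t" using mmin[of "Suc n"] n by simp
  then show ?thesis using n m by (intro exI[of _ n]) auto
qed

lemma forwardF:
  fixes k :: nat and y :: "nat \<Rightarrow> nat" and A1 and C :: "nat \<Rightarrow> nat list" and F :: "((nat \<Rightarrow> nat) \<Rightarrow> real) set"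
  assumes y: "y \<in> Sigma k" and A1: "A1 \<noteq> []" and A1k: "set A1 \<subseteq> {..<k}"
    and Ck0: "\<forall>m\<ge>1. set (C m) \<subseteq> {..<k}"
    and lim: "(\<lambda>n. real (length (C (Suc n))) / real (length (Aseq A1 C y n))) \<longlonglongrightarrow> 0"
    and F: "finite F" "F \<subseteq> {f. continuous_map (Sigma_top k) euclideanreal f}" and e: "e > 0"
  shows "eventually (\<lambda>n. \<forall>t. length (Aseq A1 C y (Suc n)) \<le> t \<longrightarrow> t \<le> length (Aseq A1 C y (Suc (Suc n))) \<longrightarrow>
            (\<forall>f\<in>F. \<bar>birk_avg f (Tmap A1 C y) t - birk_avg f y (Suc n)\<bar> < e)) sequentially"
proof -
  have Ck: "\<And>m. m \<ge> 1 \<Longrightarrow> set (C m) \<subseteq> {..<k}" using Ck0 by blast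
  have "\<forall>f\<in>F. eventually (\<lambda>n. \<forall>t. length (Aseq A1 C y (Suc n)) \<le> t \<longrightarrow> t \<le> length (Aseq A1 C y (Suc (Suc n))) \<longrightarrow>
            \<bar>birk_avg f (Tmap A1 C y) t - birk_avg f y (Suc n)\<bar> < e) sequentially"
  proof
    fix f assume "f \<in> F"
    then have "continuous_map (Sigma_top k) euclideanreal f" using F(2) by auto
    then show "eventually (\<lambda>n. \<forall>t. length (Aseq A1 C y (Suc n)) \<le> t \<longrightarrow> t \<le> length (Aseq A1 C y (Suc (Suc n))) \<longrightarrow>
            \<bar>birk_avg f (Tmap A1 C y) t - birk_avg f y (Suc n)\<bar> < e) sequentially"
      using forward[OF y A1 A1k Ck lim _ e] by blast
  qed
  from eventually_ball_finite[OF F(1) this]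
  show ?thesis by (rule eventually_mono) (intro allI impI ballI, blast)
qed

theorem proposition3p5:
  fixes k :: nat and P :: "(nat \<Rightarrow> nat) set" and C :: "nat \<Rightarrow> nat list" and A1 :: "nat list"
  assumes "k \<ge> 2"
    and "subshift k P" and "P \<noteq> Sigma k"
    and "bij_betw C {1..} {w. w \<noteq> [] \<and> contained P w}"
    and "set A1 \<subseteq> {..<k}" and "\<not> contained P A1"
    and "\<And>y. y \<in> P \<Longrightarrow>
           ((\<lambda>n. real (length (C (Suc n))) / real (length (Aseq A1 C y n))) \<longlongrightarrow> 0) sequentially"
  shows "\<forall>y\<in>P. Vset k (Tmap A1 C y) = Vset k y"
proof
  fix y assume yP: "y \<in> P"
  have PS: "P \<subseteq> Sigma k" and Pne: "P \<noteq> {}" using assms(2) unfolding subshift_def by auto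
  have y: "y \<in> Sigma k" using yP PS by auto
  have A1: "A1 \<noteq> []"
  proof
    assume "A1 = []"
    then have "contained P A1" using Pne unfolding contained_def by auto
    then show False using assms(6) by simp
  qed
  have Ck: "set (C m) \<subseteq> {..<k}" if m: "m \<ge> 1" for m
  proof
    fix v assume v: "v \<in> set (C m)"
    have "C m \<in> {w. w \<noteq> [] \<and> contained P w}" using bij_betw_apply[OF assms(4)] m by auto
    then obtain z where z: "z \<in> P" "\<And>i. i < length (C m) \<Longrightarrow> z i = C m ! i"
      unfolding contained_def by auto
    obtain i where i: "i < length (C m)" "C m ! i = v" using v by (auto simp: in_set_conv_nth)
    have "z \<in> Sigma k" using z(1) PS by auto
    then show "v \<in> {..<k}" using z(2)[OF i(1)] i(2) by (auto simp: Sigma_def)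
  qed
  have lim: "(\<lambda>n. real (length (C (Suc n))) / real (length (Aseq A1 C y n))) \<longlonglongrightarrow> 0"
    by (rule assms(7)[OF yP])
  let ?x = "Tmap A1 C y"
  let ?a = "\<lambda>m. length (Aseq A1 C y m)"
  have Ck0: "\<forall>m\<ge>1. set (C m) \<subseteq> {..<k}" using Ck by blast
  note FW = forwardF[OF y A1 assms(5) Ck0 lim]
  show "Vset k ?x = Vset k y"
  proof (intro equalityI subsetI)
    fix \<mu> assume "\<mu> \<in> Vset k ?x"
    then have basic: "prob_space \<mu>" "space \<mu> = Sigma k" "sets \<mu> = borel_sets_of (Sigma_top k)"
      and fr: "\<And>F \<epsilon>. finite F \<Longrightarrow> F \<subseteq> {f. continuous_map (Sigma_top k) euclideanreal f} \<Longrightarrow> \<epsilon> > 0 \<Longrightarrow>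
        (\<exists>\<^sub>F n in sequentially. \<forall>f\<in>F. \<bar>birk_avg f ?x n - integral\<^sup>L \<mu> f\<bar> < \<epsilon>)"
      unfolding Vset_def by auto
    show "\<mu> \<in> Vset k y" unfolding Vset_def mem_Collect_eq
    proof (intro conjI basic allI impI)
      fix F and \<epsilon> :: real
      assume F: "finite F" "F \<subseteq> {f. continuous_map (Sigma_top k) euclideanreal f}" and e: "\<epsilon> > 0"
      have e2: "\<epsilon> / 2 > 0" using e by simp
      have fr2: "\<forall>N. \<exists>t\<ge>N. \<forall>f\<in>F. \<bar>birk_avg f ?x t - integral\<^sup>L \<mu> f\<bar> < \<epsilon> / 2"
        using fr[OF F e2] unfolding frequently_sequentially .
      obtain N where N: "\<And>n t f. n \<ge> N \<Longrightarrow> ?a (Suc n) \<le> t \<Longrightarrow> t \<le> ?a (Suc (Suc n)) \<Longrightarrow> f \<in> F \<Longrightarrow>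
            \<bar>birk_avg f ?x t - birk_avg f y (Suc n)\<bar> < \<epsilon> / 2"
        using FW[OF F e2] unfolding eventually_sequentially by blast
      show "\<exists>\<^sub>F n in sequentially. \<forall>f\<in>F. \<bar>birk_avg f y n - integral\<^sup>L \<mu> f\<bar> < \<epsilon>"
        unfolding frequently_sequentially
      proof
        fix N'
        obtain t where t: "t \<ge> ?a (Suc (max N N'))" "\<forall>f\<in>F. \<bar>birk_avg f ?x t - integral\<^sup>L \<mu> f\<bar> < \<epsilon> / 2"
          using fr2 by blast
        obtain n where n: "n \<ge> max N N'" "?a (Suc n) \<le> t" "t \<le> ?a (Suc (Suc n))"
          using interval_find[OF A1 t(1)] by blast
        have "\<forall>f\<in>F. \<bar>birk_avg f y (Suc n) - integral\<^sup>L \<mu> f\<bar> < \<epsilon>"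
        proof
          fix f assume "f \<in> F"
          then have "\<bar>birk_avg f ?x t - birk_avg f y (Suc n)\<bar> < \<epsilon> / 2"
            "\<bar>birk_avg f ?x t - integral\<^sup>L \<mu> f\<bar> < \<epsilon> / 2" using N n t(2) by auto
          then show "\<bar>birk_avg f y (Suc n) - integral\<^sup>L \<mu> f\<bar> < \<epsilon>" by linarith
        qed
        then show "\<exists>m\<ge>N'. \<forall>f\<in>F. \<bar>birk_avg f y m - integral\<^sup>L \<mu> f\<bar> < \<epsilon>"
          using n(1) by (intro exI[of _ "Suc n"]) auto
      qed
    qed
  next
    fix \<mu> assume "\<mu> \<in> Vset k y"
    then have basic: "prob_space \<mu>" "space \<mu> = Sigma k" "sets \<mu> = borel_sets_of (Sigma_top k)"
      and fr: "\<And>F \<epsilon>. finite F \<Longrightarrow> F \<subseteq> {f. continuous_map (Sigma_top k) euclideanreal f} \<Longrightarrow> \<epsilon> > 0 \<Longrightarrow>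
        (\<exists>\<^sub>F n in sequentially. \<forall>f\<in>F. \<bar>birk_avg f y n - integral\<^sup>L \<mu> f\<bar> < \<epsilon>)"
      unfolding Vset_def by auto
    show "\<mu> \<in> Vset k ?x" unfolding Vset_def mem_Collect_eq
    proof (intro conjI basic allI impI)
      fix F and \<epsilon> :: real
      assume F: "finite F" "F \<subseteq> {f. continuous_map (Sigma_top k) euclideanreal f}" and e: "\<epsilon> > 0"
      have e2: "\<epsilon> / 2 > 0" using e by simp
      have fr2: "\<forall>N. \<exists>m\<ge>N. \<forall>f\<in>F. \<bar>birk_avg f y m - integral\<^sup>L \<mu> f\<bar> < \<epsilon> / 2"
        using fr[OF F e2] unfolding frequently_sequentially .
      obtain N where N: "\<And>n t f. n \<ge> N \<Longrightarrow> ?a (Suc n) \<le> t \<Longrightarrow> t \<le> ?a (Suc (Suc n)) \<Longrightarrow> f \<in> F \<Longrightarrow>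
            \<bar>birk_avg f ?x t - birk_avg f y (Suc n)\<bar> < \<epsilon> / 2"
        using FW[OF F e2] unfolding eventually_sequentially by blast
      show "\<exists>\<^sub>F n in sequentially. \<forall>f\<in>F. \<bar>birk_avg f ?x n - integral\<^sup>L \<mu> f\<bar> < \<epsilon>"
        unfolding frequently_sequentially
      proof
        fix N'
        obtain m where m: "m \<ge> Suc (max N N')" "\<forall>f\<in>F. \<bar>birk_avg f y m - integral\<^sup>L \<mu> f\<bar> < \<epsilon> / 2"
          using fr2 by blast
        then obtain n where n: "m = Suc n" "n \<ge> max N N'" by (cases m) auto
        have tn: "?a (Suc n) \<le> ?a (Suc n)" "?a (Suc n) \<le> ?a (Suc (Suc n))" by (auto intro: Aseq_len_mono)
        have "\<forall>f\<in>F. \<bar>birk_avg f ?x (?a (Suc n)) - integral\<^sup>L \<mu> f\<bar> < \<epsilon>"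
        proof
          fix f assume "f \<in> F"
          then have "\<bar>birk_avg f ?x (?a (Suc n)) - birk_avg f y (Suc n)\<bar> < \<epsilon> / 2"
            "\<bar>birk_avg f y (Suc n) - integral\<^sup>L \<mu> f\<bar> < \<epsilon> / 2" using N[OF _ tn] n m(2) by auto
          then show "\<bar>birk_avg f ?x (?a (Suc n)) - integral\<^sup>L \<mu> f\<bar> < \<epsilon>" by linarith
        qed
        moreover have "N' \<le> ?a (Suc n)" using Aseq_len_gt[OF A1, of "Suc n" C y] n(2) by simp
        ultimately show "\<exists>t\<ge>N'. \<forall>f\<in>F. \<bar>birk_avg f ?x t - integral\<^sup>L \<mu> f\<bar> < \<epsilon>" by blast
      qed
    qed
  qed
qed


end
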